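(* Let $(a_i)_{i\ge0}$ be a sequence in $[0,\infty]$ and $(s_i)_{i\ge0}$ a sequence in $[0,\infty)$. Put $y_i=1+\sum_{j\le i}a_j$, $t_i=\sum_{j<i}s_j$ (for $i\in\mathbb{N}\cup\{\infty\}$) and $I=\inf\{i:y_i=\infty\}$ (with $\inf\emptyset=\infty$). Suppose there is $c>0$ such that for every $i$, $a_{i+1}\ge c\,y_i^2s_i/2$ and $s_i\le1/y_i$. Then $t_I\le2+4/c$.
   Context: Elementary deterministic statement about real sequences; conventions $1/\infty=0$ and $\inf\emptyset=\infty$. *)

theory Defs
  imports "HOL-Analysis.Analysis" "HOL-Library.Extended_Nat"
begin

definition yseq :: "(nat \<Rightarrow> ennreal) \<Rightarrow> nat \<Rightarrow> ennreal" where
  "yseq a i = 1 + (\<Sum>j\<le>i. a j)"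

definition Iblow :: "(nat \<Rightarrow> ennreal) \<Rightarrow> enat" where
  "Iblow a = Inf {enat i | i. yseq a i = \<infinity>}"

definition tseq :: "(nat \<Rightarrow> real) \<Rightarrow> enat \<Rightarrow> ennreal" where
  "tseq s n = (\<Sum>j. if enat j < n then ennreal (s j) else 0)"

end

theory Submission
  imports Defs
begin

lemma real_step:
  fixes Y A s c :: real
  assumes "Y \<ge> 1" "A \<ge> 0" "s \<ge> 0" "c > 0" "A \<ge> c * Y^2 * s / 2" "s \<le> 1 / Y"
  shows "s \<le> (2 + 4 / c) * (1 / Y - 1 / (Y + A))"
proof -
  have Yp: "Y > 0" using assms by simp
  have d: "1 / Y - 1 / (Y + A) = A / (Y * (Y + A))" using Yp assms(2)
    by (simp add: field_simps)
  show ?thesis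
  proof (cases "Y + A \<le> 2 * Y")
    case True
    have "A / (Y * (Y + A)) \<ge> A / (2 * Y^2)"
      using True Yp assms(2) by (intro divide_left_mono) (auto simp: power2_eq_square intro!: mult_pos_pos)
    moreover have "A / (2 * Y^2) \<ge> c * s / 4"
      using assms(5) Yp by (simp add: field_simps power2_eq_square)
    ultimately have "A / (Y * (Y + A)) \<ge> c * s / 4" by linarith
    hence "(4 / c) * (A / (Y * (Y + A))) \<ge> (4 / c) * (c * s / 4)" using assms(4) by (intro mult_left_mono) auto
    hence "(4 / c) * (A / (Y * (Y + A))) \<ge> s" using assms(4) by simp
    moreover have "2 * (A / (Y * (Y + A))) \<ge> 0" using Yp assms(2) by simp
    ultimately show ?thesis unfolding d by (simp add: algebra_simps)
  next
    case False
    have "1 / (Y + A) \<le> 1 / (2 * Y)" using False Yp by (intro divide_left_mono) auto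
    hence "1 / Y - 1 / (Y + A) \<ge> 1 / (2 * Y)" by (simp add: field_simps)
    hence "2 * (1 / Y - 1 / (Y + A)) \<ge> 1 / Y" by (simp add: field_simps)
    moreover have "(4 / c) * (1 / Y - 1 / (Y + A)) \<ge> 0"
    proof (rule mult_nonneg_nonneg)
      show "0 \<le> 4 / c" using assms(4) by simp
      have "0 \<le> 1 / (2 * Y)" using Yp by simp
      then show "0 \<le> 1 / Y - 1 / (Y + A)" using \<open>1 / Y - 1 / (Y + A) \<ge> 1 / (2 * Y)\<close> by linarith
    qed
    ultimately show ?thesis using assms(6) by (simp add: algebra_simps)
  qed
qed

theorem lemma7p2:
  fixes a :: "nat \<Rightarrow> ennreal" and s :: "nat \<Rightarrow> real" and c :: real
  assumes s_nonneg: "\<And>i. s i \<ge> 0"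
    and c_pos: "c > 0"
    and h1: "\<And>i. a (Suc i) \<ge> ennreal c * (yseq a i)\<^sup>2 * ennreal (s i) / 2"
    and h2: "\<And>i. ennreal (s i) \<le> 1 / yseq a i"
  shows "tseq s (Iblow a) \<le> ennreal (2 + 4 / c)"
proof -
  define K where "K = 2 + 4 / c"
  have K1: "K \<ge> 2" using c_pos by (simp add: K_def)
  define u where "u i = enn2real (1 / yseq a i)" for i
  have y1: "yseq a i \<ge> 1" for i unfolding yseq_def by simp
  have ysuc: "yseq a (Suc i) = yseq a i + a (Suc i)" for i
    unfolding yseq_def by (simp add: add.assoc)
  have u01: "0 \<le> u i \<and> u i \<le> 1" for i
  proof -
    have "1 / yseq a i \<le> 1"
    proof (rule divide_le_posI_ennreal)
      show "0 < yseq a i" using y1[of i] by (rule order_less_le_trans[OF zero_less_one])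
      show "1 \<le> yseq a i * 1" using y1[of i] by simp
    qed
    thus ?thesis unfolding u_def using enn2real_mono[of "1 / yseq a i" 1] by (simp add: enn2real_nonneg)
  qed
  have step: "s i \<le> K * (u i - u (Suc i))" for i
  proof (cases "yseq a i = \<infinity>")
    case True
    hence "ennreal (s i) \<le> 0" using h2[of i] by simp
    hence "s i \<le> 0" by (simp only: le_zero_eq ennreal_eq_0_iff)
    moreover have "yseq a (Suc i) = \<infinity>" using True ysuc by simp
    moreover have "u i = 0" "u (Suc i) = 0" using True \<open>yseq a (Suc i) = \<infinity>\<close> by (simp_all add: u_def)
    ultimately have "K * (u i - u (Suc i)) = 0" "s i \<le> 0" by (simp_all only: diff_self mult_zero_right)
    then show ?thesis by (simp only:)
  next
    case False
    then obtain Y where Y: "yseq a i = ennreal Y" "Y \<ge> 0" by (cases "yseq a i") auto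
    have "ennreal 1 \<le> ennreal Y" using y1[of i] Y(1) by simp
    hence Y1: "Y \<ge> 1" using Y(2) by (subst (asm) ennreal_le_iff) auto
    have inv: "1 / ennreal Z = ennreal (1 / Z)" if "Z \<ge> 1" for Z
    proof -
      have "ennreal 1 / ennreal Z = ennreal (1 / Z)" using that by (intro divide_ennreal) auto
      thus ?thesis by (simp only: ennreal_1)
    qed
    have ui: "u i = 1 / Y" unfolding u_def Y(1) inv[OF Y1] using Y1 by simp
    have "ennreal (s i) \<le> ennreal (1 / Y)" using h2[of i] unfolding Y(1) inv[OF Y1] .
    hence sY: "s i \<le> 1 / Y" using Y1 by (subst (asm) ennreal_le_iff) auto
    show ?thesis
    proof (cases "a (Suc i) = \<infinity>")
      case True
      hence "u (Suc i) = 0" using ysuc[of i] by (simp add: u_def)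
      have nn: "0 \<le> (K - 1) * (1 / Y)" using K1 Y1 by (intro mult_nonneg_nonneg) auto
      have e: "(K - 1) * (1 / Y) = K * (1 / Y) - 1 / Y" by (simp add: diff_divide_distrib)
      have "s i \<le> K * (1 / Y)" using sY nn e by linarith
      then show ?thesis using ui \<open>u (Suc i) = 0\<close> by simp
    next
      case False
      then obtain A where A: "a (Suc i) = ennreal A" "A \<ge> 0" by (cases "a (Suc i)") auto
      have "yseq a (Suc i) = ennreal (Y + A)" using ysuc[of i] Y A by (simp add: ennreal_plus)
      hence us: "u (Suc i) = 1 / (Y + A)" unfolding u_def using inv[of "Y + A"] Y1 A by simp
      have "ennreal c * (yseq a i)\<^sup>2 * ennreal (s i) / 2 = ennreal (c * Y^2 * s i / 2)"
      proof -
        have "ennreal c * (yseq a i)\<^sup>2 * ennreal (s i) = ennreal c * ennreal (Y^2) * ennreal (s i)"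
          using Y(1) Y(2) by (simp add: ennreal_power)
        also have "\<dots> = ennreal (c * Y^2 * s i)"
          using c_pos s_nonneg[of i] by (simp add: ennreal_mult)
        finally show ?thesis
          using c_pos s_nonneg[of i] by (simp add: ennreal_divide_numeral)
      qed
      hence "ennreal (c * Y^2 * s i / 2) \<le> ennreal A" using h1[of i] A by simp
      hence hA: "c * Y^2 * s i / 2 \<le> A" using A by simp
      show ?thesis unfolding ui us K_def
        using real_step[OF Y1 A(2) s_nonneg c_pos hA sY] .
    qed
  qed
  have part: "(\<Sum>j<n. s j) \<le> K * (u 0 - u n)" for n
  proof (induction n)
    case 0 then show ?case by simp
  next
    case (Suc n)
    have "(\<Sum>j<Suc n. s j) = (\<Sum>j<n. s j) + s n" by simp
    also have "\<dots> \<le> K * (u 0 - u n) + K * (u n - u (Suc n))" using Suc.IH step[of n] by (rule add_mono)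
    also have "\<dots> = K * (u 0 - u (Suc n))" by (simp add: right_diff_distrib)
    finally show ?case .
  qed
  have partK: "(\<Sum>j<n. ennreal (s j)) \<le> ennreal K" for n
  proof -
    have "(\<Sum>j<n. ennreal (s j)) = ennreal (\<Sum>j<n. s j)"
      using s_nonneg by (simp add: sum_ennreal)
    moreover have "(\<Sum>j<n. s j) \<le> K"
    proof -
      have "K * (u 0 - u n) \<le> K * 1" using u01[of 0] u01[of n] K1 by (intro mult_left_mono) auto
      then show ?thesis using part[of n] by linarith
    qed
    ultimately show ?thesis by (simp add: ennreal_leI)
  qed
  have "tseq s (Iblow a) \<le> (\<Sum>j. ennreal (s j))"
    unfolding tseq_def
  proof (rule suminf_le)
    show "(if enat n < Iblow a then ennreal (s n) else 0) \<le> ennreal (s n)" for n by simp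
  qed (rule summableI)+
  also have "\<dots> \<le> ennreal K"
    by (rule suminf_le_const[OF summableI]) (rule partK)
  finally show ?thesis by (simp add: K_def)
qed

end
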